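(* Let $\Sigma$ be a set and let $1\le p<\infty$. Let $\rho$ be a separating quasi-metric on $\Sigma^*$ that is arbitrarily decomposable of order $p$. Suppose $f:\Sigma\to\mathbb{R}$ is strictly positive and $g:\Sigma\to\mathbb{R}$ is non-negative, and let $\bar f,\bar g$ be their canonical homomorphic extensions to $\Sigma^*$. Assume that for all $x,y\in\Sigma^*$, \[\bar f(x)-\bar f(y)\le\rho^p(x,y)\quad\text{and}\quad \bar g(y)-\bar g(x)\le\rho^p(x,y).\] Then the function $Q:\Sigma^*\times\Sigma^*\to\mathbb{R}$ defined by \[Q(x,y)=\min_{\tilde x\in\mathfrak{F}(x),\ \tilde y\in\mathfrak{F}(y)}\Big(\bar f(x)-\bar f(\tilde x)+\bar g(y)-\bar g(\tilde y)+\rho^p(\tilde x,\tilde y)\Big)^{1/p}\] is a quasi-metric on $\Sigma^*$.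
   Context: $\Sigma^*$ is the free monoid on $\Sigma$ (finite words, concatenation, empty word $e$). A word $u$ is a factor of $v$ if $v=xuy$ for some $x,y\in\Sigma^*$; $\mathfrak{F}(v)$ denotes the set of factors of $v$. The canonical homomorphic extension of $f:\Sigma\to\mathbb{R}$ is $\bar f:\Sigma^*\to\mathbb{R}$ with $\bar f(e)=0$ and $\bar f(x_1\cdots x_n)=\sum_{i=1}^n f(x_i)$. A quasi-metric on $X$ is a map $q:X\times X\to\mathbb{R}_{\ge0}$ with $q(x,y)=q(y,x)=0\iff x=y$ and $q(x,z)\le q(x,y)+q(y,z)$; it is separating if $q(x,y)=0$ implies $x=y$. A function $\rho:\Sigma^*\times\Sigma^*\to\mathbb{R}$ is arbitrarily decomposable of order $p$ if for all $x,y\in\Sigma^*$: (i) for every $y'\in\mathfrak{F}(y)$ there exist $x',x_1^*,x_2^*\in\mathfrak{F}(x)$ with $x=x_1^*x'x_2^*$ and $y_1^*,y_2^*,u,v\in\mathfrak{F}(y)$ with $y=y_1^*uy'vy_2^*$ and $\rho(x,y)\ge(\rho^p(x_1^*,y_1^* )+\rho^p(x',y')+\rho^p(x_2^*,y_2^* ))^{1/p}$; and (ii) for every $x'\in\mathfrak{F}(x)$ there exist $y',y_1^*,y_2^*\in\mathfrak{F}(y)$ with $y=y_1^*y'y_2^*$ and $x_1^*,x_2^*,u,v\in\mathfrak{F}(x)$ with $x=x_1^*ux'vx_2^*$ and $\rho(x,y)\ge(\rho^p(x_1^*,y_1^* )+\rho^p(x',y')+\rho^p(x_2^*,y_2^*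 ))^{1/p}$. *)

theory Defs
  imports Complex_Main
begin

definition factors :: "'a list \<Rightarrow> 'a list set" where
  "factors v = {u. \<exists>x y. v = x @ u @ y}"

definition hom_ext :: "('a \<Rightarrow> real) \<Rightarrow> 'a list \<Rightarrow> real" where
  "hom_ext f w = sum_list (map f w)"

definition quasi_metric :: "('b \<Rightarrow> 'b \<Rightarrow> real) \<Rightarrow> bool" where
  "quasi_metric q \<longleftrightarrow>
     (\<forall>x y. q x y \<ge> 0) \<and>
     (\<forall>x y. (q x y = 0 \<and> q y x = 0) \<longleftrightarrow> x = y) \<and>
     (\<forall>x y z. q x z \<le> q x y + q y z)"

definition separating :: "('b \<Rightarrow> 'b \<Rightarrow> real) \<Rightarrow> bool" where
  "separating q \<longleftrightarrow> (\<forall>x y. q x y = 0 \<longrightarrow> x = y)"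

definition arb_decomposable :: "('a list \<Rightarrow> 'a list \<Rightarrow> real) \<Rightarrow> real \<Rightarrow> bool" where
  "arb_decomposable \<rho> p \<longleftrightarrow>
    (\<forall>x y.
      (\<forall>y' \<in> factors y. \<exists>x' x1 x2. x' \<in> factors x \<and> x1 \<in> factors x \<and> x2 \<in> factors x \<and>
          x = x1 @ x' @ x2 \<and>
          (\<exists>y1 y2 u v. y1 \<in> factors y \<and> y2 \<in> factors y \<and> u \<in> factors y \<and> v \<in> factors y \<and>
             y = y1 @ u @ y' @ v @ y2 \<and>
             \<rho> x y \<ge> (\<rho> x1 y1 powr p + \<rho> x' y' powr p + \<rho> x2 y2 powr p) powr (1 / p))) \<and>
      (\<forall>x' \<in> factors x. \<exists>y' y1 y2. y' \<in> factors y \<and> y1 \<in> factors y \<and> y2 \<in> factors y \<and>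
          y = y1 @ y' @ y2 \<and>
          (\<exists>x1 x2 u v. x1 \<in> factors x \<and> x2 \<in> factors x \<and> u \<in> factors x \<and> v \<in> factors x \<and>
             x = x1 @ u @ x' @ v @ x2 \<and>
             \<rho> x y \<ge> (\<rho> x1 y1 powr p + \<rho> x' y' powr p + \<rho> x2 y2 powr p) powr (1 / p))))"

definition Qfun :: "('a \<Rightarrow> real) \<Rightarrow> ('a \<Rightarrow> real) \<Rightarrow> ('a list \<Rightarrow> 'a list \<Rightarrow> real) \<Rightarrow> real
                    \<Rightarrow> 'a list \<Rightarrow> 'a list \<Rightarrow> real" where
  "Qfun f g \<rho> p x y =
     Min ((\<lambda>(xt, yt). (hom_ext f x - hom_ext f xt + hom_ext g y - hom_ext g yt + \<rho> xt yt powr p) powr (1 / p))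
          ` (factors x \<times> factors y))"

end

theory Submission imports Defs "HOL-Analysis.Analysis" begin
lemma powr_le_self: fixes u p :: real shows "0 \<le> u \<Longrightarrow> u \<le> 1 \<Longrightarrow> 1 \<le> p \<Longrightarrow> u powr p \<le> u"
  by (metis powr_mono' powr_one)
lemma cvx: fixes x y l p :: real
  assumes "0 \<le> x" "0 \<le> y" "0 \<le> l" "l \<le> 1" "1 \<le> p"
  shows "(l*x+(1-l)*y) powr p \<le> l * x powr p + (1-l) * y powr p"
proof -
  consider "x > 0" "y > 0" | "x = 0" | "y = 0" using assms by linarith
  then show ?thesis
  proof cases
    case 1
    show ?thesis using convex_onD[OF powr_convex[OF assms(5)], of "1-l" x y] 1 assms by simp
  next
    case 2
    have "(1-l) powr p \<le> 1 - l" using powr_le_self assms by simp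
    then have "(1-l) powr p * y powr p \<le> (1-l) * y powr p" by (simp add: mult_right_mono)
    then show ?thesis using 2 assms by (simp add: powr_mult)
  next
    case 3
    have "l powr p \<le> l" using powr_le_self assms by simp
    then have "l powr p * x powr p \<le> l * x powr p" by (simp add: mult_right_mono)
    then show ?thesis using 3 assms by (simp add: powr_mult)
  qed
qed

lemma mink:
  fixes c d s t p :: real
  assumes "0 \<le> c" "0 \<le> d" "0 \<le> s" "0 \<le> t" "1 \<le> p"
  defines "N1 \<equiv> (c powr p + s powr p) powr (1/p)" and "N2 \<equiv> (d powr p + t powr p) powr (1/p)"
  shows "(c+d) powr p + (s+t) powr p \<le> (N1 + N2) powr p"
proof -
  have p0: "p > 0" using assms by simp
  have N1p: "N1 powr p = c powr p + s powr p" unfolding N1_def using p0 by (simp add: powr_powr)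
  have N2p: "N2 powr p = d powr p + t powr p" unfolding N2_def using p0 by (simp add: powr_powr)
  have N1n: "N1 \<ge> 0" "N2 \<ge> 0" unfolding N1_def N2_def by auto
  show ?thesis
  proof (cases "N1 = 0 \<or> N2 = 0")
    case True
    then show ?thesis
    proof
      assume "N1 = 0"
      then have "c powr p + s powr p = 0" using N1p p0 by simp
      then have "c = 0" "s = 0" using assms by (auto simp: add_nonneg_eq_0_iff)
      then show ?thesis using N2p \<open>N1 = 0\<close> by simp
    next
      assume "N2 = 0"
      then have "d powr p + t powr p = 0" using N2p p0 by simp
      then have "d = 0" "t = 0" using assms by (auto simp: add_nonneg_eq_0_iff)
      then show ?thesis using N1p \<open>N2 = 0\<close> by simp
    qed
  next
    case False
    then have pos: "N1 > 0" "N2 > 0" using N1n by auto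
    define N where "N = N1 + N2"
    define l where "l = N1 / N"
    have Npos: "N > 0" using pos N_def by simp
    have l1: "1 - l = N2 / N" unfolding l_def N_def using Npos N_def by (simp add: field_simps)
    have l01: "0 \<le> l" "l \<le> 1" using pos Npos unfolding l_def N_def by auto
    have "l * (c/N1) = c/N" "(1-l) * (d/N2) = d/N" "l * (s/N1) = s/N" "(1-l) * (t/N2) = t/N"
      using pos by (simp_all only: l1, simp_all add: l_def)
    then have e1: "(c+d)/N = l * (c/N1) + (1-l) * (d/N2)" and e2: "(s+t)/N = l * (s/N1) + (1-l) * (t/N2)"
      by (simp_all add: add_divide_distrib)
    have i1: "((c+d)/N) powr p \<le> l * (c/N1) powr p + (1-l) * (d/N2) powr p"
      unfolding e1 by (rule cvx) (use assms pos l01 in auto)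
    have i2: "((s+t)/N) powr p \<le> l * (s/N1) powr p + (1-l) * (t/N2) powr p"
      unfolding e2 by (rule cvx) (use assms pos l01 in auto)
    have "((c+d)/N) powr p + ((s+t)/N) powr p \<le> l * ((c powr p + s powr p) / N1 powr p) + (1-l) * ((d powr p + t powr p)/ N2 powr p)"
      using i1 i2 assms pos by (simp add: powr_divide add_divide_distrib distrib_left)
    also have "\<dots> = 1" using pos by (simp add: N1p[symmetric] N2p[symmetric])
    finally have H: "((c+d)/N) powr p + ((s+t)/N) powr p \<le> 1" .
    have "((c+d)/N) powr p + ((s+t)/N) powr p = ((c+d) powr p + (s+t) powr p) / N powr p"
      using assms Npos by (simp add: powr_divide add_divide_distrib[symmetric] del: add_divide_distrib)
    with H have "((c+d) powr p + (s+t) powr p) / N powr p \<le> 1" by simp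
    moreover have "N powr p > 0" using Npos by simp
    ultimately show ?thesis using N_def by (simp add: divide_le_eq)
  qed
qed
lemma superadd:
  fixes c d p :: real assumes "0 \<le> c" "0 \<le> d" "1 \<le> p"
  shows "c powr p + d powr p \<le> (c+d) powr p"
proof (cases "c + d = 0")
  case True then have "c = 0" "d = 0" using assms by linarith+
  then show ?thesis using assms by simp
next
  case False
  then have pos: "c + d > 0" using assms by simp
  have "c powr p = (c+d) powr p * (c/(c+d)) powr p" using pos assms by (simp add: powr_divide)
  also have "\<dots> \<le> (c+d) powr p * (c/(c+d))"
    by (rule mult_left_mono, rule powr_le_self) (use assms pos in auto)
  finally have 1: "c powr p \<le> (c+d) powr p * (c/(c+d))" .
  have "d powr p = (c+d) powr p * (d/(c+d)) powr p" using pos assms by (simp add: powr_divide)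
  also have "\<dots> \<le> (c+d) powr p * (d/(c+d))"
    by (rule mult_left_mono, rule powr_le_self) (use assms pos in auto)
  finally have 2: "d powr p \<le> (c+d) powr p * (d/(c+d))" .
  have "(c+d) powr p * (c/(c+d)) + (c+d) powr p * (d/(c+d)) = (c+d) powr p"
    using pos by (simp add: distrib_left[symmetric] add_divide_distrib[symmetric] del: add_divide_distrib)
  with 1 2 show ?thesis by linarith
qed

lemma key:
  fixes C D s t p :: real
  assumes "0 \<le> C" "0 \<le> D" "0 \<le> s" "0 \<le> t" "1 \<le> p"
  shows "C + D + (s+t) powr p \<le> ((C + s powr p) powr (1/p) + (D + t powr p) powr (1/p)) powr p"
proof -
  define c where "c = C powr (1/p)"
  define d where "d = D powr (1/p)"
  have cp: "c powr p = C" "d powr p = D" unfolding c_def d_def using assms by (simp_all add: powr_powr)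
  have cn: "c \<ge> 0" "d \<ge> 0" unfolding c_def d_def by auto
  have "C + D \<le> (c+d) powr p" using superadd[OF cn assms(5)] cp by simp
  moreover have "(c+d) powr p + (s+t) powr p \<le> ((c powr p + s powr p) powr (1/p) + (d powr p + t powr p) powr (1/p)) powr p"
    by (rule mink) (use cn assms in auto)
  ultimately show ?thesis using cp by simp
qed

lemma powr_up:
  fixes r S p :: real assumes "0 \<le> S" "0 \<le> r" "p > 0" "S powr (1/p) \<le> r"
  shows "S \<le> r powr p"
proof -
  have "(S powr (1/p)) powr p \<le> r powr p" by (rule powr_mono2) (use assms in auto)
  then show ?thesis using assms by (simp add: powr_powr)
qed


lemma hom_app[simp]: "hom_ext f (x @ y) = hom_ext f x + hom_ext f y"
  by (simp add: hom_ext_def)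
lemma hom_nil[simp]: "hom_ext f [] = 0" by (simp add: hom_ext_def)
lemma hom_cons[simp]: "hom_ext f (a # y) = f a + hom_ext f y" by (simp add: hom_ext_def)

lemma hom_nonneg: "\<forall>a. f a \<ge> 0 \<Longrightarrow> hom_ext f x \<ge> 0"
  by (induction x) (auto simp: add_nonneg_nonneg)

lemma hom_pos: "\<forall>a. f a > 0 \<Longrightarrow> x \<noteq> [] \<Longrightarrow> hom_ext f x > 0"
proof (induction x)
  case Nil then show ?case by simp
next
  case (Cons a x)
  then show ?case using hom_nonneg[of f x] by (cases "x = []") (auto intro: add_pos_nonneg less_imp_le)
qed

lemma factors_iff: "u \<in> factors v \<longleftrightarrow> (\<exists>i. i + length u \<le> length v \<and> u = take (length u) (drop i v))"
proof
  assume "u \<in> factors v"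
  then obtain x y where "v = x @ u @ y" unfolding factors_def by auto
  then show "\<exists>i. i + length u \<le> length v \<and> u = take (length u) (drop i v)"
    by (intro exI[of _ "length x"]) auto
next
  assume "\<exists>i. i + length u \<le> length v \<and> u = take (length u) (drop i v)"
  then obtain i where i: "i + length u \<le> length v" "u = take (length u) (drop i v)" by auto
  have "v = take i v @ take (length u) (drop i v) @ drop (i + length u) v"
    by (metis append_take_drop_id drop_drop add.commute)
  then show "u \<in> factors v" unfolding factors_def using i by auto
qed

lemma factor_td: "i + n \<le> length v \<Longrightarrow> take n (drop i v) \<in> factors v"
  unfolding factors_iff by (intro exI[of _ i]) auto

lemma factors_refl[simp]: "x \<in> factors x"
  unfolding factors_def by (auto intro: exI[of _ "[]"])

lemma factors_trans: "u \<in> factors v \<Longrightarrow> v \<in> factors w \<Longrightarrow> u \<in> factors w"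
  unfolding factors_def by (auto, metis append.assoc)

lemma factors_len: "u \<in> factors v \<Longrightarrow> length u \<le> length v"
  unfolding factors_def by auto

lemma factors_set: "u \<in> factors v \<Longrightarrow> set u \<subseteq> set v"
  unfolding factors_def by auto

lemma finite_factors: "finite (factors v)"
proof -
  have "factors v \<subseteq> {xs. set xs \<subseteq> set v \<and> length xs \<le> length v}"
    using factors_len factors_set by blast
  then show ?thesis using finite_lists_length_le[of "set v" "length v"] finite_subset by blast
qed

lemma factors_antisym: "u \<in> factors v \<Longrightarrow> v \<in> factors u \<Longrightarrow> u = v"
proof -
  assume a: "u \<in> factors v" "v \<in> factors u"
  then have "length u = length v" using factors_len by (metis le_antisym)
  with a(1) show "u = v" unfolding factors_def by auto
qed

lemma hom_factor_le: "\<forall>a. f a \<ge> 0 \<Longrightarrow> u \<in> factors v \<Longrightarrow> hom_ext f u \<le> hom_ext f v"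
  unfolding factors_def using hom_nonneg[of f] by fastforce

lemma hom_factor_eq: "\<forall>a. f a > 0 \<Longrightarrow> u \<in> factors v \<Longrightarrow> hom_ext f u = hom_ext f v \<Longrightarrow> u = v"
proof -
  assume f: "\<forall>a. f a > 0" and u: "u \<in> factors v" and e: "hom_ext f u = hom_ext f v"
  then obtain x y where v: "v = x @ u @ y" unfolding factors_def by auto
  have f0: "\<forall>a. f a \<ge> 0" using f less_imp_le by blast
  have "hom_ext f x + hom_ext f y = 0" using e v by simp
  then have "hom_ext f x = 0" "hom_ext f y = 0" using hom_nonneg[OF f0, of x] hom_nonneg[OF f0, of y] by linarith+
  then have "x = []" "y = []" using hom_pos[OF f] by (metis less_irrefl)+
  then show "u = v" using v by simp
qed

lemma hom_td: "i + n \<le> length y \<Longrightarrow> hom_ext f (take n (drop i y)) = (\<Sum>t\<in>{i..<i+n}. f (y!t))"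
proof (induction n)
  case 0 then show ?case by simp
next
  case (Suc n)
  have "take (Suc n) (drop i y) = take n (drop i y) @ [y ! (i+n)]"
    using Suc.prems by (simp add: take_Suc_conv_app_nth)
  then show ?case using Suc by simp
qed

lemma td_sub: "i \<le> a \<Longrightarrow> a + m \<le> i + n \<Longrightarrow> take m (drop a y) = take m (drop (a - i) (take n (drop i y)))"
  by (simp add: drop_take take_take min_def)

lemma overlap:
  assumes "yt \<in> factors y" "yh \<in> factors y"
  shows "\<exists>w. w \<in> factors yt \<and> w \<in> factors yh \<and>
     (\<forall>h. (\<forall>a. h a \<ge> 0) \<longrightarrow> hom_ext h yt + hom_ext h yh \<le> hom_ext h y + hom_ext h w)"
proof -
  obtain i where i: "i + length yt \<le> length y" "yt = take (length yt) (drop i y)"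
    using assms(1) factors_iff by blast
  obtain k where k: "k + length yh \<le> length y" "yh = take (length yh) (drop k y)"
    using assms(2) factors_iff by blast
  define n1 where "n1 = length yt"
  define n2 where "n2 = length yh"
  define m1 where "m1 = max i k"
  define m2 where "m2 = min (i+n1) (k+n2)"
  define w where "w = take (m2 - m1) (drop m1 y)"
  have w1: "w \<in> factors yt"
  proof (cases "m1 \<le> m2")
    case True
    have ye: "take n1 (drop i y) = yt" by (metis i(2) n1_def)
    have "w = take (m2 - m1) (drop (m1 - i) (take n1 (drop i y)))"
      using True i unfolding w_def m1_def m2_def
      by (intro td_sub) auto
    then have "w = take (m2 - m1) (drop (m1 - i) yt)" using ye by simp
    then show ?thesis using True factor_td[of "m1 - i" "m2 - m1" yt] unfolding m1_def m2_def n1_def by auto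
  next
    case False
    then have "w = []" unfolding w_def by simp
    then show ?thesis unfolding factors_def by auto
  qed
  have w2: "w \<in> factors yh"
  proof (cases "m1 \<le> m2")
    case True
    have ye: "take n2 (drop k y) = yh" by (metis k(2) n2_def)
    have "w = take (m2 - m1) (drop (m1 - k) (take n2 (drop k y)))"
      using True k unfolding w_def m1_def m2_def
      by (intro td_sub) auto
    then have "w = take (m2 - m1) (drop (m1 - k) yh)" using ye by simp
    then show ?thesis using True factor_td[of "m1 - k" "m2 - m1" yh] unfolding m1_def m2_def n2_def by auto
  next
    case False
    then have "w = []" unfolding w_def by simp
    then show ?thesis unfolding factors_def by auto
  qed
  have "\<forall>h. (\<forall>a. h a \<ge> 0) \<longrightarrow> hom_ext h yt + hom_ext h yh \<le> hom_ext h y + hom_ext h w"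
  proof (intro allI impI)
    fix h :: "'a \<Rightarrow> real" assume h: "\<forall>a. h a \<ge> 0"
    have m12: "m1 + (m2 - m1) \<le> length y" using i k unfolding m1_def m2_def n1_def n2_def by auto
    have 1: "hom_ext h yt = (\<Sum>t\<in>{i..<i+n1}. h (y!t))" using hom_td[OF i(1), of h] i(2) n1_def by simp
    have 2: "hom_ext h yh = (\<Sum>t\<in>{k..<k+n2}. h (y!t))" using hom_td[OF k(1), of h] k(2) n2_def by simp
    have 3: "hom_ext h w = (\<Sum>t\<in>{m1..<m1+(m2-m1)}. h (y!t))" using hom_td[OF m12, of h] w_def by simp
    have 4: "hom_ext h y = (\<Sum>t\<in>{0..<length y}. h (y!t))" using hom_td[of 0 "length y" y h] by simp
    have int: "{i..<i+n1} \<inter> {k..<k+n2} = {m1..<m1+(m2-m1)}" unfolding m1_def m2_def by auto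
    have un: "{i..<i+n1} \<union> {k..<k+n2} \<subseteq> {0..<length y}" using i k n1_def n2_def by auto
    have "(\<Sum>t\<in>{i..<i+n1}. h (y!t)) + (\<Sum>t\<in>{k..<k+n2}. h (y!t)) =
          (\<Sum>t\<in>{i..<i+n1} \<union> {k..<k+n2}. h (y!t)) + (\<Sum>t\<in>{i..<i+n1} \<inter> {k..<k+n2}. h (y!t))"
      by (rule sum.union_inter[symmetric]) auto
    also have "\<dots> \<le> (\<Sum>t\<in>{0..<length y}. h (y!t)) + (\<Sum>t\<in>{i..<i+n1} \<inter> {k..<k+n2}. h (y!t))"
      using sum_mono2[OF _ un, of "\<lambda>t. h (y!t)"] h by auto
    finally show "hom_ext h yt + hom_ext h yh \<le> hom_ext h y + hom_ext h w"
      using 1 2 3 4 int by simp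
  qed
  then show ?thesis using w1 w2 by blast
qed


lemma Q_le:
  assumes "xt \<in> factors x" "yt \<in> factors y"
  shows "Qfun f g \<rho> p x y \<le> (hom_ext f x - hom_ext f xt + hom_ext g y - hom_ext g yt + \<rho> xt yt powr p) powr (1 / p)"
  unfolding Qfun_def
  by (rule Min_le) (use assms finite_factors in auto)

lemma Q_attain:
  "\<exists>xt\<in>factors x. \<exists>yt\<in>factors y. Qfun f g \<rho> p x y = (hom_ext f x - hom_ext f xt + hom_ext g y - hom_ext g yt + \<rho> xt yt powr p) powr (1 / p)"
proof -
  let ?S = "(\<lambda>(xt, yt). (hom_ext f x - hom_ext f xt + hom_ext g y - hom_ext g yt + \<rho> xt yt powr p) powr (1 / p)) ` (factors x \<times> factors y)"
  have "Min ?S \<in> ?S" by (rule Min_in) (use finite_factors factors_refl in blast)+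
  then show ?thesis unfolding Qfun_def by auto
qed

theorem theorem5p3:
  fixes \<rho> :: "'a list \<Rightarrow> 'a list \<Rightarrow> real" and f g :: "'a \<Rightarrow> real" and p :: real
  assumes "1 \<le> p"
    and "quasi_metric \<rho>" and "separating \<rho>" and "arb_decomposable \<rho> p"
    and "\<forall>a. f a > 0" and "\<forall>a. g a \<ge> 0"
    and "\<forall>x y. hom_ext f x - hom_ext f y \<le> \<rho> x y powr p"
    and "\<forall>x y. hom_ext g y - hom_ext g x \<le> \<rho> x y powr p"
  shows "quasi_metric (Qfun f g \<rho> p)"
proof -
  note p1 = assms(1)
  have p0: "p > 0" using p1 by simp
  have f0: "\<forall>a. f a \<ge> 0" using assms(5) less_imp_le by blast
  note g0 = assms(6)
  have rn: "\<rho> a b \<ge> 0" for a b using assms(2) unfolding quasi_metric_def by blast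
  have rz: "\<rho> a a = 0" for a using assms(2) unfolding quasi_metric_def by blast
  have rtri: "\<rho> a c \<le> \<rho> a b + \<rho> b c" for a b c using assms(2) unfolding quasi_metric_def by blast
  let ?F = "hom_ext f" and ?G = "hom_ext g"
  have inn: "0 \<le> ?F x - ?F xt + ?G y - ?G yt + \<rho> xt yt powr p" if "xt \<in> factors x" "yt \<in> factors y" for x y xt yt
    using hom_factor_le[OF f0 that(1)] hom_factor_le[OF g0 that(2)] by simp
  have Qn: "Qfun f g \<rho> p x y \<ge> 0" for x y
    using Q_attain[of x y f g \<rho> p] by auto
  have Qz: "Qfun f g \<rho> p x x = 0" for x
    using Q_le[of x x x x f g \<rho> p] Qn[of x x] rz[of x] p0 by simp
  have Q0: "x \<in> factors y" if "Qfun f g \<rho> p x y = 0" for x y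
  proof -
    obtain xt yt where xy: "xt \<in> factors x" "yt \<in> factors y"
      and e: "Qfun f g \<rho> p x y = (?F x - ?F xt + ?G y - ?G yt + \<rho> xt yt powr p) powr (1 / p)"
      using Q_attain[of x y f g \<rho> p] by blast
    have "?F x - ?F xt + ?G y - ?G yt + \<rho> xt yt powr p = 0" using e that by simp
    moreover have "?F x - ?F xt \<ge> 0" "?G y - ?G yt \<ge> 0" "\<rho> xt yt powr p \<ge> 0"
      using hom_factor_le[OF f0 xy(1)] hom_factor_le[OF g0 xy(2)] by auto
    ultimately have "?F xt = ?F x" "\<rho> xt yt powr p = 0" by linarith+
    then have "xt = x" "\<rho> xt yt = 0" using hom_factor_eq[OF assms(5) xy(1)] by auto
    then have "x = yt" using assms(3) unfolding separating_def by blast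
    then show ?thesis using xy by simp
  qed
  have tri: "Qfun f g \<rho> p x z \<le> Qfun f g \<rho> p x y + Qfun f g \<rho> p y z" for x y z
  proof -
    obtain xt yt where xy: "xt \<in> factors x" "yt \<in> factors y"
      and eA: "Qfun f g \<rho> p x y = (?F x - ?F xt + ?G y - ?G yt + \<rho> xt yt powr p) powr (1 / p)"
      using Q_attain[of x y f g \<rho> p] by blast
    obtain yh zh where yz: "yh \<in> factors y" "zh \<in> factors z"
      and eB: "Qfun f g \<rho> p y z = (?F y - ?F yh + ?G z - ?G zh + \<rho> yh zh powr p) powr (1 / p)"
      using Q_attain[of y z f g \<rho> p] by blast
    define A where "A = ?F x - ?F xt + ?G y - ?G yt + \<rho> xt yt powr p"
    define B where "B = ?F y - ?F yh + ?G z - ?G zh + \<rho> yh zh powr p"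
    obtain w where w: "w \<in> factors yt" "w \<in> factors yh"
      and ov: "\<And>h. (\<forall>a. h a \<ge> 0) \<Longrightarrow> hom_ext h yt + hom_ext h yh \<le> hom_ext h y + hom_ext h w"
      using overlap[OF xy(2) yz(1)] by blast
    obtain x' x1 x2 y1 y2 u v where
      xd: "x' \<in> factors xt" "xt = x1 @ x' @ x2" and yd: "yt = y1 @ u @ w @ v @ y2"
      and r1: "\<rho> xt yt \<ge> (\<rho> x1 y1 powr p + \<rho> x' w powr p + \<rho> x2 y2 powr p) powr (1 / p)"
      using assms(4) w(1) unfolding arb_decomposable_def by meson
    obtain z' z1 z2 y1' y2' u' v' where
      zd: "z' \<in> factors zh" "zh = z1 @ z' @ z2" and yd': "yh = y1' @ u' @ w @ v' @ y2'"
      and r2: "\<rho> yh zh \<ge> (\<rho> y1' z1 powr p + \<rho> w z' powr p + \<rho> y2' z2 powr p) powr (1 / p)"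
      using assms(4) w(2) unfolding arb_decomposable_def by meson
    define s where "s = \<rho> x' w"
    define t where "t = \<rho> w z'"
    have R1: "\<rho> xt yt powr p \<ge> \<rho> x1 y1 powr p + s powr p + \<rho> x2 y2 powr p"
      unfolding s_def by (rule powr_up) (use r1 rn p0 in auto)
    have R2: "\<rho> yh zh powr p \<ge> \<rho> y1' z1 powr p + t powr p + \<rho> y2' z2 powr p"
      unfolding t_def by (rule powr_up) (use r2 rn p0 in auto)
    have x'x: "x' \<in> factors x" using factors_trans[OF xd(1) xy(1)] .
    have z'z: "z' \<in> factors z" using factors_trans[OF zd(1) yz(2)] .
    define V where "V = ?F x - ?F x' + ?G z - ?G z' + \<rho> x' z' powr p"
    have V0: "V \<ge> 0" unfolding V_def by (rule inn[OF x'x z'z])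
    have h1: "?F x1 \<le> ?F y1 + \<rho> x1 y1 powr p" "?F x2 \<le> ?F y2 + \<rho> x2 y2 powr p"
      using assms(7) by (smt (verit))+
    have h2: "?G z1 \<le> ?G y1' + \<rho> y1' z1 powr p" "?G z2 \<le> ?G y2' + \<rho> y2' z2 powr p"
      using assms(8) by (smt (verit))+
    have h3: "?F u \<ge> 0" "?F v \<ge> 0" "?G u' \<ge> 0" "?G v' \<ge> 0"
      using hom_nonneg[OF f0] hom_nonneg[OF g0] by auto
    have h4: "?F yt + ?F yh \<le> ?F y + ?F w" "?G yt + ?G yh \<le> ?G y + ?G w"
      using ov[OF f0] ov[OF g0] by auto
    have h5: "\<rho> x' z' powr p \<le> (s + t) powr p"
      unfolding s_def t_def by (rule powr_mono2) (use rn rtri p0 in auto)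
    have h6: "?F x - ?F xt \<ge> 0" "?G y - ?G yt \<ge> 0" "?F y - ?F yh \<ge> 0" "?G z - ?G zh \<ge> 0"
      using hom_factor_le[OF f0 xy(1)] hom_factor_le[OF g0 xy(2)]
        hom_factor_le[OF f0 yz(1)] hom_factor_le[OF g0 yz(2)] by auto
    have h7: "\<rho> x1 y1 powr p \<ge> 0" "\<rho> x2 y2 powr p \<ge> 0" "\<rho> y1' z1 powr p \<ge> 0" "\<rho> y2' z2 powr p \<ge> 0"
      by auto
    have st: "s \<ge> 0" "t \<ge> 0" unfolding s_def t_def using rn by auto
    have C0: "A - s powr p \<ge> 0" using A_def R1 h6 h7 by linarith
    have D0: "B - t powr p \<ge> 0" using B_def R2 h6 h7 by linarith
    have "V \<le> (A - s powr p) + (B - t powr p) + (s + t) powr p"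
      unfolding V_def A_def B_def using xd(2) zd(2) yd yd' h1 h2 h3 h4 h5 R1 R2 by simp
    also have "\<dots> \<le> (((A - s powr p) + s powr p) powr (1/p) + ((B - t powr p) + t powr p) powr (1/p)) powr p"
      by (rule key) (use C0 D0 st p1 in auto)
    also have "\<dots> = (Qfun f g \<rho> p x y + Qfun f g \<rho> p y z) powr p"
      using eA eB A_def B_def by simp
    finally have VL: "V \<le> (Qfun f g \<rho> p x y + Qfun f g \<rho> p y z) powr p" .
    have "Qfun f g \<rho> p x z \<le> V powr (1/p)" unfolding V_def by (rule Q_le[OF x'x z'z])
    also have "\<dots> \<le> ((Qfun f g \<rho> p x y + Qfun f g \<rho> p y z) powr p) powr (1/p)"
      by (rule powr_mono2) (use V0 VL p0 in auto)
    also have "\<dots> = Qfun f g \<rho> p x y + Qfun f g \<rho> p y z"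
      using Qn[of x y] Qn[of y z] p0 by (simp add: powr_powr)
    finally show ?thesis .
  qed
  show ?thesis unfolding quasi_metric_def
  proof (intro conjI allI)
    fix x y show "Qfun f g \<rho> p x y \<ge> 0" by (rule Qn)
  next
    fix x y show "(Qfun f g \<rho> p x y = 0 \<and> Qfun f g \<rho> p y x = 0) \<longleftrightarrow> x = y"
      using Q0 Qz factors_antisym by blast
  next
    fix x y z show "Qfun f g \<rho> p x z \<le> Qfun f g \<rho> p x y + Qfun f g \<rho> p y z" by (rule tri)
  qed
qed
end
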